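(* (Subject reduction for LPCF.) If $\Gamma;\Delta\vdash e:\tau$ and $e\rightsquigarrow e'$, then $\Gamma;\Delta\vdash e':\tau$.
   Context: LPCF (linear PCF). Types: $\tau ::= \mathsf{Nat}\mid\mathsf{Bool}\mid \tau\,\&\,\tau' \mid \tau\otimes\tau' \mid \tau\multimap\tau' \mid \tau\to\tau'$. Terms: $e ::= x \mid \mathtt{0},\mathtt{1},\mathtt{2},\dots \mid \mathtt{succ}\mid\mathtt{pred}\mid\mathtt{iszero} \mid \lambda x.e \mid e\,e' \mid \mathtt{true}\mid\mathtt{false} \mid \mathtt{if}\ e_1\ \mathtt{then}\ e_2\ \mathtt{else}\ e_3 \mid \langle e_1,e_2\rangle \mid \mathtt{proj}_i(e)\ (i=1,2) \mid \mathtt{fix}_\tau \mid e_1\otimes e_2 \mid \mathtt{let}\ x\otimes y = e\ \mathtt{in}\ e'$. Terms are identified up to renaming of bound variables and $e[e'/x]$ is capture-avoiding substitution. Typing judgements $\Gamma;\Delta\vdash e:\tau$, with $\Gamma$ (non-linear) and $\Delta$ (linear) finite maps from variables to types with disjoint domains ($\Delta,\Delta'$ denotes a disjoint union). Rules: $\Gamma;\emptyset\vdash x:\tau$ if $x:\tau\in\Gamma$; $\Gamma;x:\tau\vdash x:\tau$ if $x\notin\Gamma$; $\Gamma;\emptyset\vdash\mathtt{fix}_\tau:(\tau\to\tau)\to\tau$; $\Gamma;\emptyset\vdash n:\mathsf{Nat}$ for numerals; $\Gamma;\emptyset\vdash\mathtt{succ},\mathtt{pred}:\mathsf{Nat}\multimap\mathsf{Nat}$;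 $\Gamma;\emptyset\vdash\mathtt{iszero}:\mathsf{Nat}\multimap\mathsf{Bool}$; $\Gamma;\emptyset\vdash\mathtt{true},\mathtt{false}:\mathsf{Bool}$; from $\Gamma;\Delta\vdash e_1:\mathsf{Bool}$, $\Gamma;\Delta'\vdash e_2:\tau$, $\Gamma;\Delta'\vdash e_3:\tau$ infer $\Gamma;\Delta,\Delta'\vdash \mathtt{if}\ e_1\ \mathtt{then}\ e_2\ \mathtt{else}\ e_3:\tau$; from $\Gamma;\Delta\vdash e_i:\tau_i$ ($i=1,2$) infer $\Gamma;\Delta\vdash\langle e_1,e_2\rangle:\tau_1\&\tau_2$; from $\Gamma;\Delta\vdash e:\tau_1\&\tau_2$ infer $\Gamma;\Delta\vdash\mathtt{proj}_i(e):\tau_i$; from $\Gamma;\Delta_i\vdash e_i:\tau_i$ infer $\Gamma;\Delta_1,\Delta_2\vdash e_1\otimes e_2:\tau_1\otimes\tau_2$; from $\Gamma;\Delta,x:\tau_1,y:\tau_2\vdash e:\tau$ and $\Gamma;\Delta'\vdash e':\tau_1\otimes\tau_2$ infer $\Gamma;\Delta,\Delta'\vdash\mathtt{let}\ x\otimes y=e'\ \mathtt{in}\ e:\tau$; from $\Gamma,x:\tau;\Delta\vdash e:\tau'$ infer $\Gamma;\Delta\vdash\lambda x.e:\tau\to\tau'$; from $\Gamma;\Delta\vdash e:\tau'\to\tau$ and $\Gamma;\emptyset\vdash e':\tau'$ infer $\Gamma;\Delta\vdash e\,e':\tau$; from $\Gamma;\Delta,x:\tau\vdash e:\tau'$ infer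 $\Gamma;\Delta\vdash\lambda x.e:\tau\multimap\tau'$; from $\Gamma;\Delta\vdash e:\tau'\multimap\tau$ and $\Gamma;\Delta'\vdash e':\tau'$ infer $\Gamma;\Delta,\Delta'\vdash e\,e':\tau$. One-step reduction $\rightsquigarrow$: the least relation containing $(\lambda x.e)e'\rightsquigarrow e[e'/x]$; $\mathtt{fix}_\tau\,e\rightsquigarrow e(\mathtt{fix}_\tau\,e)$; $\mathtt{succ}\,n\rightsquigarrow n+1$; $\mathtt{pred}\,0\rightsquigarrow 0$; $\mathtt{pred}\,n\rightsquigarrow n-1$ ($n\ge1$); $\mathtt{iszero}\,0\rightsquigarrow\mathtt{true}$; $\mathtt{iszero}\,n\rightsquigarrow\mathtt{false}$ ($n\ge1$); $\mathtt{if}\ \mathtt{true}\ \mathtt{then}\ e_1\ \mathtt{else}\ e_2\rightsquigarrow e_1$; $\mathtt{if}\ \mathtt{false}\ \mathtt{then}\ e_1\ \mathtt{else}\ e_2\rightsquigarrow e_2$; $\mathtt{proj}_i\langle e_1,e_2\rangle\rightsquigarrow e_i$; $\mathtt{let}\ x\otimes y=e_1\otimes e_2\ \mathtt{in}\ e\rightsquigarrow e[e_1/x,e_2/y]$; and closed under $\mathcal{E}[e_1]\rightsquigarrow\mathcal{E}[e_2]$ when $e_1\rightsquigarrow e_2$, for evaluation contexts $\mathcal{E}::=[\,]\mid\mathtt{succ}(\mathcal{E})\mid\mathtt{pred}(\mathcal{E})\mid\mathtt{iszero}(\mathcal{E})\mid\mathcal{E}\,e\mid\mathtt{if}\ \mathcal{E}\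 \mathtt{then}\ e_1\ \mathtt{else}\ e_2\mid\mathtt{proj}_i(\mathcal{E})\mid\mathtt{let}\ x\otimes y=\mathcal{E}\ \mathtt{in}\ e$. *)

theory Defs
  imports Main
begin

text \<open>LPCF with de Bruijn indices (terms are thereby identified up to renaming
of bound variables). In Let_tensor body: index 1 is x, index 0 is y.\<close>

datatype ty = TNat | TBool | With ty ty | Tensor ty ty | Lolli ty ty | Arrow ty ty

datatype tm =
    Var nat
  | Num nat
  | Succ | Pred | IsZero
  | Lam tm
  | App tm tm
  | TT | FF
  | If tm tm tm
  | Pair tm tm
  | Proj1 tm | Proj2 tm
  | Fix ty
  | Tens tm tm
  | LetT tm tm   (* LetT e' e  =  let x \<otimes> y = e' in e, e binds 2 variables *)

fun rename :: "(nat \<Rightarrow> nat) \<Rightarrow> tm \<Rightarrow> tm" where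
  "rename r (Var i) = Var (r i)"
| "rename r (Num n) = Num n"
| "rename r Succ = Succ"
| "rename r Pred = Pred"
| "rename r IsZero = IsZero"
| "rename r (Lam e) = Lam (rename (\<lambda>i. case i of 0 \<Rightarrow> 0 | Suc j \<Rightarrow> Suc (r j)) e)"
| "rename r (App e1 e2) = App (rename r e1) (rename r e2)"
| "rename r TT = TT"
| "rename r FF = FF"
| "rename r (If e1 e2 e3) = If (rename r e1) (rename r e2) (rename r e3)"
| "rename r (Pair e1 e2) = Pair (rename r e1) (rename r e2)"
| "rename r (Proj1 e) = Proj1 (rename r e)"
| "rename r (Proj2 e) = Proj2 (rename r e)"
| "rename r (Fix t) = Fix t"
| "rename r (Tens e1 e2) = Tens (rename r e1) (rename r e2)"
| "rename r (LetT e1 e) = LetT (rename r e1)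
     (rename (\<lambda>i. case i of 0 \<Rightarrow> 0 | Suc 0 \<Rightarrow> Suc 0 | Suc (Suc j) \<Rightarrow> Suc (Suc (r j))) e)"

definition up :: "(nat \<Rightarrow> tm) \<Rightarrow> nat \<Rightarrow> tm" where
  "up \<sigma> i = (case i of 0 \<Rightarrow> Var 0 | Suc j \<Rightarrow> rename Suc (\<sigma> j))"

fun subst :: "(nat \<Rightarrow> tm) \<Rightarrow> tm \<Rightarrow> tm" where
  "subst \<sigma> (Var i) = \<sigma> i"
| "subst \<sigma> (Num n) = Num n"
| "subst \<sigma> Succ = Succ"
| "subst \<sigma> Pred = Pred"
| "subst \<sigma> IsZero = IsZero"
| "subst \<sigma> (Lam e) = Lam (subst (up \<sigma>) e)"
| "subst \<sigma> (App e1 e2) = App (subst \<sigma> e1) (subst \<sigma> e2)"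
| "subst \<sigma> TT = TT"
| "subst \<sigma> FF = FF"
| "subst \<sigma> (If e1 e2 e3) = If (subst \<sigma> e1) (subst \<sigma> e2) (subst \<sigma> e3)"
| "subst \<sigma> (Pair e1 e2) = Pair (subst \<sigma> e1) (subst \<sigma> e2)"
| "subst \<sigma> (Proj1 e) = Proj1 (subst \<sigma> e)"
| "subst \<sigma> (Proj2 e) = Proj2 (subst \<sigma> e)"
| "subst \<sigma> (Fix t) = Fix t"
| "subst \<sigma> (Tens e1 e2) = Tens (subst \<sigma> e1) (subst \<sigma> e2)"
| "subst \<sigma> (LetT e1 e) = LetT (subst \<sigma> e1) (subst (up (up \<sigma>)) e)"

definition scons :: "'a \<Rightarrow> (nat \<Rightarrow> 'a) \<Rightarrow> nat \<Rightarrow> 'a" where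
  "scons a f i = (case i of 0 \<Rightarrow> a | Suc j \<Rightarrow> f j)"

text \<open>e[e'/x] where x is the variable bound by the outermost binder (index 0).\<close>
definition subst1 :: "tm \<Rightarrow> tm \<Rightarrow> tm" where
  "subst1 e e' = subst (scons e' Var) e"

text \<open>e[e1/x, e2/y] for the body of a tensor let (x = index 1, y = index 0).\<close>
definition subst2 :: "tm \<Rightarrow> tm \<Rightarrow> tm \<Rightarrow> tm" where
  "subst2 e e1 e2 = subst (scons e2 (scons e1 Var)) e"

type_synonym ctx = "nat \<rightharpoonup> ty"

definition ext :: "ty option \<Rightarrow> ctx \<Rightarrow> ctx" where
  "ext a \<Gamma> = scons a \<Gamma>"

inductive typing :: "ctx \<Rightarrow> ctx \<Rightarrow> tm \<Rightarrow> ty \<Rightarrow> bool" ("_ ; _ \<turnstile> _ : _" [50,50,50,50] 50) where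
  T_VarNL: "\<Gamma> x = Some \<tau> \<Longrightarrow> \<Gamma>; Map.empty \<turnstile> Var x : \<tau>"
| T_VarL: "\<Gamma> x = None \<Longrightarrow> \<Gamma>; [x \<mapsto> \<tau>] \<turnstile> Var x : \<tau>"
| T_Fix: "\<Gamma>; Map.empty \<turnstile> Fix \<tau> : Arrow (Arrow \<tau> \<tau>) \<tau>"
| T_Num: "\<Gamma>; Map.empty \<turnstile> Num n : TNat"
| T_Succ: "\<Gamma>; Map.empty \<turnstile> Succ : Lolli TNat TNat"
| T_Pred: "\<Gamma>; Map.empty \<turnstile> Pred : Lolli TNat TNat"
| T_IsZero: "\<Gamma>; Map.empty \<turnstile> IsZero : Lolli TNat TBool"
| T_True: "\<Gamma>; Map.empty \<turnstile> TT : TBool"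
| T_False: "\<Gamma>; Map.empty \<turnstile> FF : TBool"
| T_If: "\<lbrakk> \<Gamma>; \<Delta> \<turnstile> e1 : TBool; \<Gamma>; \<Delta>' \<turnstile> e2 : \<tau>; \<Gamma>; \<Delta>' \<turnstile> e3 : \<tau>;
          dom \<Delta> \<inter> dom \<Delta>' = {} \<rbrakk> \<Longrightarrow> \<Gamma>; \<Delta> ++ \<Delta>' \<turnstile> If e1 e2 e3 : \<tau>"
| T_Pair: "\<lbrakk> \<Gamma>; \<Delta> \<turnstile> e1 : \<tau>1; \<Gamma>; \<Delta> \<turnstile> e2 : \<tau>2 \<rbrakk> \<Longrightarrow> \<Gamma>; \<Delta> \<turnstile> Pair e1 e2 : With \<tau>1 \<tau>2"
| T_Proj1: "\<Gamma>; \<Delta> \<turnstile> e : With \<tau>1 \<tau>2 \<Longrightarrow> \<Gamma>; \<Delta> \<turnstile> Proj1 e : \<tau>1"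
| T_Proj2: "\<Gamma>; \<Delta> \<turnstile> e : With \<tau>1 \<tau>2 \<Longrightarrow> \<Gamma>; \<Delta> \<turnstile> Proj2 e : \<tau>2"
| T_Tens: "\<lbrakk> \<Gamma>; \<Delta>1 \<turnstile> e1 : \<tau>1; \<Gamma>; \<Delta>2 \<turnstile> e2 : \<tau>2; dom \<Delta>1 \<inter> dom \<Delta>2 = {} \<rbrakk>
           \<Longrightarrow> \<Gamma>; \<Delta>1 ++ \<Delta>2 \<turnstile> Tens e1 e2 : Tensor \<tau>1 \<tau>2"
| T_Let: "\<lbrakk> ext None (ext None \<Gamma>); ext (Some \<tau>2) (ext (Some \<tau>1) \<Delta>) \<turnstile> e : \<tau>;
           \<Gamma>; \<Delta>' \<turnstile> e' : Tensor \<tau>1 \<tau>2; dom \<Delta> \<inter> dom \<Delta>' = {} \<rbrakk>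
           \<Longrightarrow> \<Gamma>; \<Delta> ++ \<Delta>' \<turnstile> LetT e' e : \<tau>"
| T_LamArr: "ext (Some \<tau>) \<Gamma>; ext None \<Delta> \<turnstile> e : \<tau>' \<Longrightarrow> \<Gamma>; \<Delta> \<turnstile> Lam e : Arrow \<tau> \<tau>'"
| T_AppArr: "\<lbrakk> \<Gamma>; \<Delta> \<turnstile> e : Arrow \<tau>' \<tau>; \<Gamma>; Map.empty \<turnstile> e' : \<tau>' \<rbrakk> \<Longrightarrow> \<Gamma>; \<Delta> \<turnstile> App e e' : \<tau>"
| T_LamLolli: "ext None \<Gamma>; ext (Some \<tau>) \<Delta> \<turnstile> e : \<tau>' \<Longrightarrow> \<Gamma>; \<Delta> \<turnstile> Lam e : Lolli \<tau> \<tau>'"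
| T_AppLolli: "\<lbrakk> \<Gamma>; \<Delta> \<turnstile> e : Lolli \<tau>' \<tau>; \<Gamma>; \<Delta>' \<turnstile> e' : \<tau>'; dom \<Delta> \<inter> dom \<Delta>' = {} \<rbrakk>
              \<Longrightarrow> \<Gamma>; \<Delta> ++ \<Delta>' \<turnstile> App e e' : \<tau>"

inductive step :: "tm \<Rightarrow> tm \<Rightarrow> bool" (infix "\<leadsto>" 50) where
  S_Beta: "App (Lam e) e' \<leadsto> subst1 e e'"
| S_Fix: "App (Fix \<tau>) e \<leadsto> App e (App (Fix \<tau>) e)"
| S_Succ: "App Succ (Num n) \<leadsto> Num (Suc n)"
| S_Pred0: "App Pred (Num 0) \<leadsto> Num 0"
| S_PredS: "n \<ge> 1 \<Longrightarrow> App Pred (Num n) \<leadsto> Num (n - 1)"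
| S_IsZero0: "App IsZero (Num 0) \<leadsto> TT"
| S_IsZeroS: "n \<ge> 1 \<Longrightarrow> App IsZero (Num n) \<leadsto> FF"
| S_IfT: "If TT e1 e2 \<leadsto> e1"
| S_IfF: "If FF e1 e2 \<leadsto> e2"
| S_Proj1: "Proj1 (Pair e1 e2) \<leadsto> e1"
| S_Proj2: "Proj2 (Pair e1 e2) \<leadsto> e2"
| S_Let: "LetT (Tens e1 e2) e \<leadsto> subst2 e e1 e2"
| C_Succ: "e \<leadsto> e' \<Longrightarrow> App Succ e \<leadsto> App Succ e'"
| C_Pred: "e \<leadsto> e' \<Longrightarrow> App Pred e \<leadsto> App Pred e'"
| C_IsZero: "e \<leadsto> e' \<Longrightarrow> App IsZero e \<leadsto> App IsZero e'"
| C_App: "e \<leadsto> e' \<Longrightarrow> App e e2 \<leadsto> App e' e2"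
| C_If: "e \<leadsto> e' \<Longrightarrow> If e e1 e2 \<leadsto> If e' e1 e2"
| C_Proj1: "e \<leadsto> e' \<Longrightarrow> Proj1 e \<leadsto> Proj1 e'"
| C_Proj2: "e \<leadsto> e' \<Longrightarrow> Proj2 e \<leadsto> Proj2 e'"
| C_Let: "e \<leadsto> e' \<Longrightarrow> LetT e e2 \<leadsto> LetT e' e2"

end

theory Submission
  imports Defs
begin


lemma ext0[simp]: "ext a G 0 = a" and extS[simp]: "ext a G (Suc j) = G j"
  by (simp_all add: ext_def scons_def)
lemma scons0[simp]: "scons a f 0 = a" and sconsS[simp]: "scons a f (Suc j) = f j"
  by (simp_all add: scons_def)

definition lift :: "(nat \<Rightarrow> nat) \<Rightarrow> nat \<Rightarrow> nat" where
  "lift r i = (case i of 0 \<Rightarrow> 0 | Suc j \<Rightarrow> Suc (r j))"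
lemma lift0[simp]: "lift r 0 = 0" and liftS[simp]: "lift r (Suc j) = Suc (r j)"
  by (simp_all add: lift_def)

lemma rename_Lam': "rename r (Lam e) = Lam (rename (lift r) e)"
proof -
  have "(\<lambda>i. case i of 0 \<Rightarrow> 0 | Suc j \<Rightarrow> Suc (r j)) = lift r" by (simp add: fun_eq_iff lift_def)
  then show ?thesis by simp
qed
lemma rename_LetT': "rename r (LetT e1 e) = LetT (rename r e1) (rename (lift (lift r)) e)"
proof -
  have "(\<lambda>i. case i of 0 \<Rightarrow> 0 | Suc 0 \<Rightarrow> Suc 0 | Suc (Suc j) \<Rightarrow> Suc (Suc (r j))) = lift (lift r)"
    by (auto simp: lift_def fun_eq_iff split: nat.split)
  then show ?thesis by simp
qed
declare rename.simps(6,16)[simp del]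
declare rename_Lam'[simp] rename_LetT'[simp]

lemma ext_eq: "ext a G x = (case x of 0 \<Rightarrow> a | Suc j \<Rightarrow> G j)"
  by (simp add: ext_def scons_def)

lemma dom_ext: "dom (ext a G) = (case a of None \<Rightarrow> {} | Some _ \<Rightarrow> {0}) \<union> Suc ` dom G"
proof (rule set_eqI)
  fix x show "x \<in> dom (ext a G) \<longleftrightarrow> x \<in> (case a of None \<Rightarrow> {} | Some _ \<Rightarrow> {0}) \<union> Suc ` dom G"
    by (cases x) (auto split: option.splits)
qed

lemma typing_disj: "\<Gamma>; \<Delta> \<turnstile> e : \<tau> \<Longrightarrow> dom \<Gamma> \<inter> dom \<Delta> = {}"
proof (induction rule: typing.induct)
  case (T_Let \<Gamma> \<tau>2 \<tau>1 \<Delta> e \<tau> \<Delta>' e')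
  { fix x assume "x \<in> dom \<Gamma>" "x \<in> dom \<Delta>"
    then have "Suc (Suc x) \<in> dom (ext None (ext None \<Gamma>)) \<inter> dom (ext (Some \<tau>2) (ext (Some \<tau>1) \<Delta>))"
      by (simp add: domIff)
    then have False using T_Let.IH(1) by blast }
  then show ?case using T_Let.IH(2) by auto
next
  case (T_VarL \<Gamma> x \<tau>) then show ?case by (auto split: if_splits)
next
  case (T_LamArr \<tau> \<Gamma> \<Delta> e \<tau>')
  { fix x assume "x \<in> dom \<Gamma>" "x \<in> dom \<Delta>"
    then have "Suc x \<in> dom (ext (Some \<tau>) \<Gamma>) \<inter> dom (ext None \<Delta>)" by (simp add: domIff)
    then have False using T_LamArr.IH by blast }
  then show ?case by auto
next
  case (T_LamLolli \<Gamma> \<tau> \<Delta> e \<tau>')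
  { fix x assume "x \<in> dom \<Gamma>" "x \<in> dom \<Delta>"
    then have "Suc x \<in> dom (ext None \<Gamma>) \<inter> dom (ext (Some \<tau>) \<Delta>)" by (simp add: domIff)
    then have False using T_LamLolli.IH by blast }
  then show ?case by auto
qed auto

lemma ren_split:
  assumes "inj r" "\<forall>x. D (r x) = (\<Delta>1 ++ \<Delta>2) x" "\<forall>y. y \<notin> range r \<longrightarrow> D y = None"
    "dom \<Delta>1 \<inter> dom \<Delta>2 = {}"
  shows "\<exists>A B. D = A ++ B \<and> dom A \<inter> dom B = {} \<and> (\<forall>x. A (r x) = \<Delta>1 x) \<and> (\<forall>y. y \<notin> range r \<longrightarrow> A y = None)
          \<and> (\<forall>x. B (r x) = \<Delta>2 x) \<and> (\<forall>y. y \<notin> range r \<longrightarrow> B y = None)"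
proof (intro exI conjI)
  let ?A = "D |` (r ` dom \<Delta>1)" and ?B = "D |` (r ` dom \<Delta>2)"
  have mem: "\<And>x S. (r x \<in> r ` S) = (x \<in> S)" using assms(1) by (simp add: inj_image_mem_iff)
  have d1: "\<And>x. x \<in> dom \<Delta>1 \<Longrightarrow> D (r x) = \<Delta>1 x"
  proof -
    fix x assume "x \<in> dom \<Delta>1" then have "\<Delta>2 x = None" using assms(4) by blast
    then show "D (r x) = \<Delta>1 x" using assms(2) by (simp add: map_add_def)
  qed
  have d2: "\<And>x. x \<in> dom \<Delta>2 \<Longrightarrow> D (r x) = \<Delta>2 x"
  proof -
    fix x assume "x \<in> dom \<Delta>2" then obtain t where "\<Delta>2 x = Some t" by blast
    then show "D (r x) = \<Delta>2 x" using assms(2) by (simp add: map_add_def)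
  qed
  have d0: "\<And>x. x \<notin> dom \<Delta>1 \<Longrightarrow> x \<notin> dom \<Delta>2 \<Longrightarrow> D (r x) = None"
    using assms(2) by (simp add: map_add_def domIff)
  show "\<forall>x. ?A (r x) = \<Delta>1 x"
  proof
    fix x show "?A (r x) = \<Delta>1 x"
      by (cases "x \<in> dom \<Delta>1") (simp_all add: mem d1 domIff)
  qed
  show "\<forall>x. ?B (r x) = \<Delta>2 x"
  proof
    fix x show "?B (r x) = \<Delta>2 x"
      by (cases "x \<in> dom \<Delta>2") (simp_all add: mem d2 domIff)
  qed
  show "\<forall>y. y \<notin> range r \<longrightarrow> ?A y = None" "\<forall>y. y \<notin> range r \<longrightarrow> ?B y = None"
    by (auto simp: restrict_map_def)
  show "dom ?A \<inter> dom ?B = {}"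
  proof -
    have "r ` dom \<Delta>1 \<inter> r ` dom \<Delta>2 = {}" using assms(1,4) by (simp add: image_Int[symmetric])
    then show ?thesis by auto
  qed
  show "D = ?A ++ ?B"
  proof
    fix y show "D y = (?A ++ ?B) y"
    proof (cases "y \<in> range r")
      case True then obtain x where y: "y = r x" by auto
      show ?thesis unfolding y
      proof (cases "x \<in> dom \<Delta>2")
        case True then obtain t where t: "\<Delta>2 x = Some t" by blast
        then have "?B (r x) = Some t" using True by (simp add: mem d2)
        then show "D (r x) = (?A ++ ?B) (r x)" using t d2 True by simp
      next
        case F: False
        show "D (r x) = (?A ++ ?B) (r x)"
        proof (cases "x \<in> dom \<Delta>1")
          case True then show ?thesis using F by (simp add: map_add_def mem d1 domIff)
        next
          case False then show ?thesis using F by (simp add: map_add_def mem d0 domIff)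
        qed
      qed
    next
      case False then show ?thesis using assms(3) by (simp add: restrict_map_def map_add_def split: option.splits)
    qed
  qed
qed

lemma ren_empty: "(\<forall>x. D (r x) = None) \<Longrightarrow> (\<forall>y. y \<notin> range r \<longrightarrow> D y = None) \<Longrightarrow> D = Map.empty"
  by (rule ext) (metis rangeE)

lemma inj_lift: assumes "inj r" shows "inj (lift r)"
proof (rule injI)
  fix a b assume "lift r a = lift r b" then show "a = b"
    using assms by (cases a; cases b) (auto dest: injD)
qed

lemma lift_G: "\<forall>x. G' (r x) = G x \<Longrightarrow> \<forall>x. ext a G' (lift r x) = ext a G x"
proof
  fix x assume "\<forall>x. G' (r x) = G x" then show "ext a G' (lift r x) = ext a G x" by (cases x) simp_all
qed

lemma lift_range: "\<forall>y. y \<notin> range r \<longrightarrow> D y = None \<Longrightarrow> \<forall>y. y \<notin> range (lift r) \<longrightarrow> ext b D y = None"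
proof (intro allI impI)
  fix y assume a: "\<forall>y. y \<notin> range r \<longrightarrow> D y = None" and y: "y \<notin> range (lift r)"
  show "ext b D y = None"
  proof (cases y)
    case 0 then show ?thesis using y by (metis lift0 rangeI)
  next
    case (Suc z) then have "z \<notin> range r" using y by (metis liftS rangeE rangeI)
    then show ?thesis using a Suc by simp
  qed
qed

lemma rename_typing:
  "\<Gamma>; \<Delta> \<turnstile> e : \<tau> \<Longrightarrow> inj r \<Longrightarrow> (\<forall>x. \<Gamma>' (r x) = \<Gamma> x) \<Longrightarrow> (\<forall>x. \<Delta>' (r x) = \<Delta> x)
   \<Longrightarrow> (\<forall>y. y \<notin> range r \<longrightarrow> \<Delta>' y = None) \<Longrightarrow> \<Gamma>'; \<Delta>' \<turnstile> rename r e : \<tau>"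
proof (induction arbitrary: r \<Gamma>' \<Delta>' rule: typing.induct)
  case (T_VarNL \<Gamma> x \<tau>)
  then have "\<Delta>' = Map.empty" using ren_empty by auto
  then show ?case using T_VarNL typing.T_VarNL by simp
next
  case (T_VarL \<Gamma> x \<tau>)
  have "\<Delta>' = [r x \<mapsto> \<tau>]"
  proof
    fix y show "\<Delta>' y = [r x \<mapsto> \<tau>] y"
      using T_VarL by (cases "y \<in> range r") (auto simp: inj_eq)
  qed
  moreover have "\<Gamma>' (r x) = None" using T_VarL by simp
  ultimately show ?case using rename.simps(1) typing.T_VarL by metis
next
  case (T_If \<Gamma> \<Delta> e1 \<Delta>'' e2 \<tau> e3)
  obtain A B where AB: "\<Delta>' = A ++ B" "dom A \<inter> dom B = {}" "\<forall>x. A (r x) = \<Delta> x" "\<forall>y. y \<notin> range r \<longrightarrow> A y = None"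
          "\<forall>x. B (r x) = \<Delta>'' x" "\<forall>y. y \<notin> range r \<longrightarrow> B y = None"
    using ren_split[OF T_If.prems(1) T_If.prems(3) T_If.prems(4) T_If.hyps(4)] by blast
  have 1: "\<Gamma>'; A \<turnstile> rename r e1 : TBool" by (rule T_If.IH(1)[OF T_If.prems(1,2) AB(3,4)])
  have 2: "\<Gamma>'; B \<turnstile> rename r e2 : \<tau>" by (rule T_If.IH(2)[OF T_If.prems(1,2) AB(5,6)])
  have 3: "\<Gamma>'; B \<turnstile> rename r e3 : \<tau>" by (rule T_If.IH(3)[OF T_If.prems(1,2) AB(5,6)])
  show ?case using typing.T_If[OF 1 2 3 AB(2)] AB(1) by simp
next
  case (T_Tens \<Gamma> \<Delta>1 e1 \<tau>1 \<Delta>2 e2 \<tau>2)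
  obtain A B where AB: "\<Delta>' = A ++ B" "dom A \<inter> dom B = {}" "\<forall>x. A (r x) = \<Delta>1 x" "\<forall>y. y \<notin> range r \<longrightarrow> A y = None"
          "\<forall>x. B (r x) = \<Delta>2 x" "\<forall>y. y \<notin> range r \<longrightarrow> B y = None"
    using ren_split[OF T_Tens.prems(1) T_Tens.prems(3) T_Tens.prems(4) T_Tens.hyps(3)] by blast
  have 1: "\<Gamma>'; A \<turnstile> rename r e1 : \<tau>1" by (rule T_Tens.IH(1)[OF T_Tens.prems(1,2) AB(3,4)])
  have 2: "\<Gamma>'; B \<turnstile> rename r e2 : \<tau>2" by (rule T_Tens.IH(2)[OF T_Tens.prems(1,2) AB(5,6)])
  show ?case using typing.T_Tens[OF 1 2 AB(2)] AB(1) by simp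
next
  case (T_AppLolli \<Gamma> \<Delta> e \<tau>' \<tau> \<Delta>'' e')
  obtain A B where AB: "\<Delta>' = A ++ B" "dom A \<inter> dom B = {}" "\<forall>x. A (r x) = \<Delta> x" "\<forall>y. y \<notin> range r \<longrightarrow> A y = None"
          "\<forall>x. B (r x) = \<Delta>'' x" "\<forall>y. y \<notin> range r \<longrightarrow> B y = None"
    using ren_split[OF T_AppLolli.prems(1) T_AppLolli.prems(3) T_AppLolli.prems(4) T_AppLolli.hyps(3)] by blast
  have 1: "\<Gamma>'; A \<turnstile> rename r e : Lolli \<tau>' \<tau>" by (rule T_AppLolli.IH(1)[OF T_AppLolli.prems(1,2) AB(3,4)])
  have 2: "\<Gamma>'; B \<turnstile> rename r e' : \<tau>'" by (rule T_AppLolli.IH(2)[OF T_AppLolli.prems(1,2) AB(5,6)])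
  show ?case using typing.T_AppLolli[OF 1 2 AB(2)] AB(1) by simp
next
  case (T_Let \<Gamma> \<tau>2 \<tau>1 \<Delta> e \<tau> \<Delta>'' e')
  obtain A B where AB: "\<Delta>' = A ++ B" "dom A \<inter> dom B = {}" "\<forall>x. A (r x) = \<Delta> x" "\<forall>y. y \<notin> range r \<longrightarrow> A y = None"
          "\<forall>x. B (r x) = \<Delta>'' x" "\<forall>y. y \<notin> range r \<longrightarrow> B y = None"
    using ren_split[OF T_Let.prems(1) T_Let.prems(3) T_Let.prems(4) T_Let.hyps(3)] by blast
  have l: "inj (lift (lift r))" using inj_lift[OF inj_lift[OF T_Let.prems(1)]] .
  have g: "\<forall>x. ext None (ext None \<Gamma>') (lift (lift r) x) = ext None (ext None \<Gamma>) x"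
    using lift_G[of "ext None \<Gamma>'" "lift r" "ext None \<Gamma>" None, OF lift_G[of "\<Gamma>'" r \<Gamma> None, OF T_Let.prems(2)]] .
  have d: "\<forall>x. ext (Some \<tau>2) (ext (Some \<tau>1) A) (lift (lift r) x) = ext (Some \<tau>2) (ext (Some \<tau>1) \<Delta>) x"
    using lift_G[of "ext (Some \<tau>1) A" "lift r" "ext (Some \<tau>1) \<Delta>" "Some \<tau>2", OF lift_G[of A r \<Delta> "Some \<tau>1", OF AB(3)]] .
  have rg: "\<forall>y. y \<notin> range (lift (lift r)) \<longrightarrow> ext (Some \<tau>2) (ext (Some \<tau>1) A) y = None"
    using lift_range[of "lift r" "ext (Some \<tau>1) A" "Some \<tau>2", OF lift_range[of r A "Some \<tau>1", OF AB(4)]] .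
  have 1: "ext None (ext None \<Gamma>'); ext (Some \<tau>2) (ext (Some \<tau>1) A) \<turnstile> rename (lift (lift r)) e : \<tau>"
    by (rule T_Let.IH(1)[OF l g d rg])
  have 2: "\<Gamma>'; B \<turnstile> rename r e' : Tensor \<tau>1 \<tau>2" by (rule T_Let.IH(2)[OF T_Let.prems(1,2) AB(5,6)])
  show ?case using typing.T_Let[OF 1 2 AB(2)] AB(1) by simp
next
  case (T_LamArr \<tau> \<Gamma> \<Delta> e \<tau>')
  have 1: "ext (Some \<tau>) \<Gamma>'; ext None \<Delta>' \<turnstile> rename (lift r) e : \<tau>'"
    by (rule T_LamArr.IH[OF inj_lift[OF T_LamArr.prems(1)] lift_G[of "\<Gamma>'" r \<Gamma> "Some \<tau>", OF T_LamArr.prems(2)] lift_G[of "\<Delta>'" r \<Delta> None, OF T_LamArr.prems(3)] lift_range[of r "\<Delta>'" None, OF T_LamArr.prems(4)]])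
  show ?case using typing.T_LamArr[OF 1] by simp
next
  case (T_LamLolli \<Gamma> \<tau> \<Delta> e \<tau>')
  have 1: "ext None \<Gamma>'; ext (Some \<tau>) \<Delta>' \<turnstile> rename (lift r) e : \<tau>'"
    by (rule T_LamLolli.IH[OF inj_lift[OF T_LamLolli.prems(1)] lift_G[of "\<Gamma>'" r \<Gamma> None, OF T_LamLolli.prems(2)] lift_G[of "\<Delta>'" r \<Delta> "Some \<tau>", OF T_LamLolli.prems(3)] lift_range[of r "\<Delta>'" "Some \<tau>", OF T_LamLolli.prems(4)]])
  show ?case using typing.T_LamLolli[OF 1] by simp
next
  case (T_Fix \<Gamma> \<tau>)
  then have "\<Delta>' = Map.empty" by (intro ren_empty) auto
  then show ?case by (simp add: typing.T_Fix)
next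
  case (T_Num \<Gamma> n)
  then have "\<Delta>' = Map.empty" by (intro ren_empty) auto
  then show ?case by (simp add: typing.T_Num)
next
  case (T_Succ \<Gamma>)
  then have "\<Delta>' = Map.empty" by (intro ren_empty) auto
  then show ?case by (simp add: typing.T_Succ)
next
  case (T_Pred \<Gamma>)
  then have "\<Delta>' = Map.empty" by (intro ren_empty) auto
  then show ?case by (simp add: typing.T_Pred)
next
  case (T_IsZero \<Gamma>)
  then have "\<Delta>' = Map.empty" by (intro ren_empty) auto
  then show ?case by (simp add: typing.T_IsZero)
next
  case (T_True \<Gamma>)
  then have "\<Delta>' = Map.empty" by (intro ren_empty) auto
  then show ?case by (simp add: typing.T_True)
next
  case (T_False \<Gamma>)
  then have "\<Delta>' = Map.empty" by (intro ren_empty) auto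
  then show ?case by (simp add: typing.T_False)
next
  case (T_Pair \<Gamma> \<Delta> e1 \<tau>1 e2 \<tau>2)
  show ?case using T_Pair.IH(1)[OF T_Pair.prems] T_Pair.IH(2)[OF T_Pair.prems] by (simp add: typing.T_Pair)
next
  case (T_Proj1 \<Gamma> \<Delta> e \<tau>1 \<tau>2)
  show ?case using T_Proj1.IH[OF T_Proj1.prems] by (simp add: typing.T_Proj1)
next
  case (T_Proj2 \<Gamma> \<Delta> e \<tau>1 \<tau>2)
  show ?case using T_Proj2.IH[OF T_Proj2.prems] by (simp add: typing.T_Proj2)
next
  case (T_AppArr \<Gamma> \<Delta> e \<tau>' \<tau> e')
  have "\<Gamma>'; Map.empty \<turnstile> rename r e' : \<tau>'" using T_AppArr.IH(2) T_AppArr.prems(1,2) by simp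
  then show ?case using T_AppArr.IH(1)[OF T_AppArr.prems] by (simp add: typing.T_AppArr)
qed



lemma rename_Suc: "\<Gamma>; \<Delta> \<turnstile> e : \<tau> \<Longrightarrow> ext a \<Gamma>; ext None \<Delta> \<turnstile> rename Suc e : \<tau>"
  apply (erule rename_typing)
     apply (auto simp: inj_def)
  by (metis ext0 not0_implies_Suc rangeI)

lemma ext_None_empty[simp]: "ext None Map.empty = Map.empty"
  by (rule ext) (simp add: ext_eq split: nat.splits)

definition SubOK where
 "SubOK \<Gamma>1 \<Delta>1 \<Gamma>2 \<sigma> D \<Delta>2 \<equiv>
 (\<forall>x t. \<Gamma>1 x = Some t \<longrightarrow> \<Gamma>2; Map.empty \<turnstile> \<sigma> x : t) \<and>
 (\<forall>x t. \<Delta>1 x = Some t \<longrightarrow> \<Gamma>2; D x \<turnstile> \<sigma> x : t) \<and>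
 (\<forall>x y. x \<in> dom \<Delta>1 \<longrightarrow> y \<in> dom \<Delta>1 \<longrightarrow> x \<noteq> y \<longrightarrow> dom (D x) \<inter> dom (D y) = {}) \<and>
 (\<forall>x\<in>dom \<Delta>1. D x \<subseteq>\<^sub>m \<Delta>2) \<and> dom \<Delta>2 = (\<Union>x\<in>dom \<Delta>1. dom (D x))"

lemma sub_empty: "SubOK \<Gamma>1 Map.empty \<Gamma>2 \<sigma> D \<Delta>2 \<Longrightarrow> \<Delta>2 = Map.empty"
  by (simp add: SubOK_def)

lemma sub_empty_intro: "SubOK \<Gamma>1 \<Delta>1 \<Gamma>2 \<sigma> D \<Delta>2 \<Longrightarrow> SubOK \<Gamma>1 Map.empty \<Gamma>2 \<sigma> D Map.empty"
  by (simp add: SubOK_def)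

lemma sub_single: "SubOK \<Gamma>1 [x\<mapsto>t] \<Gamma>2 \<sigma> D \<Delta>2 \<Longrightarrow> \<Delta>2 = D x \<and> \<Gamma>2; D x \<turnstile> \<sigma> x : t"
  unfolding SubOK_def
  by (auto intro: map_le_antisym simp: map_le_def)

lemma sub_split:
  assumes "SubOK \<Gamma>1 (\<Delta> ++ \<Delta>') \<Gamma>2 \<sigma> D \<Delta>2" "dom \<Delta> \<inter> dom \<Delta>' = {}"
  shows "\<exists>A B. \<Delta>2 = A ++ B \<and> dom A \<inter> dom B = {} \<and> SubOK \<Gamma>1 \<Delta> \<Gamma>2 \<sigma> D A \<and> SubOK \<Gamma>1 \<Delta>' \<Gamma>2 \<sigma> D B"
proof -
  let ?U = "\<lambda>X. \<Union>x\<in>dom X. dom (D x)"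
  let ?A = "\<Delta>2 |` ?U \<Delta>" and ?B = "\<Delta>2 |` ?U \<Delta>'"
  note a = assms(1)[unfolded SubOK_def]
  have dAB: "dom \<Delta>2 = ?U \<Delta> \<union> ?U \<Delta>'" using a by auto
  have disj: "?U \<Delta> \<inter> ?U \<Delta>' = {}"
  proof -
    { fix z x y assume "x \<in> dom \<Delta>" "y \<in> dom \<Delta>'" "z \<in> dom (D x)" "z \<in> dom (D y)"
      moreover have "x \<noteq> y" using assms(2) \<open>x \<in> dom \<Delta>\<close> \<open>y \<in> dom \<Delta>'\<close> by blast
      moreover have "x \<in> dom (\<Delta> ++ \<Delta>')" "y \<in> dom (\<Delta> ++ \<Delta>')" using \<open>x \<in> dom \<Delta>\<close> \<open>y \<in> dom \<Delta>'\<close> by auto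
      moreover have a3: "\<forall>x y. x \<in> dom (\<Delta> ++ \<Delta>') \<longrightarrow> y \<in> dom (\<Delta> ++ \<Delta>') \<longrightarrow> x \<noteq> y \<longrightarrow> dom (D x) \<inter> dom (D y) = {}"
        using a[THEN conjunct2, THEN conjunct2, THEN conjunct1] .
      ultimately have "dom (D x) \<inter> dom (D y) = {}" by (meson)
      then have False using \<open>z \<in> dom (D x)\<close> \<open>z \<in> dom (D y)\<close> by blast }
    then show ?thesis by blast
  qed
  have "\<Delta>2 = ?A ++ ?B"
  proof
    fix z
    have zd: "\<Delta>2 z \<noteq> None \<Longrightarrow> z \<in> ?U \<Delta> \<or> z \<in> ?U \<Delta>'"
      using dAB by (simp only: domIff[symmetric]) blast
    show "\<Delta>2 z = (?A ++ ?B) z"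
    proof (cases "z \<in> ?U \<Delta>'")
      case True then show ?thesis by (simp add: map_add_def restrict_map_def split: option.splits)
    next
      case False
      then have "(?A ++ ?B) z = ?A z" by (simp add: map_add_def restrict_map_def)
      have zd': "z \<notin> ?U \<Delta> \<Longrightarrow> \<Delta>2 z = None" using zd False by blast
      show ?thesis using zd' \<open>(?A ++ ?B) z = ?A z\<close> by (cases "z \<in> ?U \<Delta>") (auto simp: restrict_map_def map_add_def)
    qed
  qed
  moreover have "dom ?A \<inter> dom ?B = {}" using disj by auto
  moreover have "SubOK \<Gamma>1 \<Delta> \<Gamma>2 \<sigma> D ?A"
    unfolding SubOK_def
  proof (intro conjI allI impI ballI)
    fix x t assume "\<Delta> x = Some t"
    then have "(\<Delta> ++ \<Delta>') x = Some t" using assms(2) by (auto simp: map_add_def split: option.splits)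
    then show "\<Gamma>2; D x \<turnstile> \<sigma> x : t" by (rule a[THEN conjunct2, THEN conjunct1, rule_format])
  next
    fix x assume x: "x \<in> dom \<Delta>"
    then have "D x \<subseteq>\<^sub>m \<Delta>2" using a by auto
    then show "D x \<subseteq>\<^sub>m ?A" using x by (auto simp: map_le_def restrict_map_def)
  next
    show "dom ?A = ?U \<Delta>" using dAB by auto
  qed (use a in auto)
  moreover have "SubOK \<Gamma>1 \<Delta>' \<Gamma>2 \<sigma> D ?B"
    unfolding SubOK_def
  proof (intro conjI allI impI ballI)
    fix x t assume "\<Delta>' x = Some t"
    then have "(\<Delta> ++ \<Delta>') x = Some t" by (auto simp: map_add_def split: option.splits)
    then show "\<Gamma>2; D x \<turnstile> \<sigma> x : t" by (rule a[THEN conjunct2, THEN conjunct1, rule_format])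
  next
    fix x assume x: "x \<in> dom \<Delta>'"
    then have "D x \<subseteq>\<^sub>m \<Delta>2" using a by auto
    then show "D x \<subseteq>\<^sub>m ?B" using x by (auto simp: map_le_def restrict_map_def)
  next
    show "dom ?B = ?U \<Delta>'" using dAB by auto
  qed (use a in auto)
  ultimately show ?thesis by blast
qed

lemma up0[simp]: "up \<sigma> 0 = Var 0" and upS[simp]: "up \<sigma> (Suc j) = rename Suc (\<sigma> j)"
  by (simp_all add: up_def)

lemma sub_lift:
  assumes "SubOK \<Gamma>1 \<Delta>1 \<Gamma>2 \<sigma> D \<Delta>2" "b \<noteq> None \<longrightarrow> a = None"
  shows "SubOK (ext a \<Gamma>1) (ext b \<Delta>1) (ext a \<Gamma>2) (up \<sigma>)
     (scons (case b of None \<Rightarrow> Map.empty | Some t \<Rightarrow> [0\<mapsto>t]) (\<lambda>j. ext None (D j))) (ext b \<Delta>2)"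
  (is "SubOK _ _ _ _ ?D _")
  unfolding SubOK_def
proof (intro conjI allI impI ballI)
  note a = assms(1)[unfolded SubOK_def]
  fix x t assume h: "ext a \<Gamma>1 x = Some t"
  show "ext a \<Gamma>2; Map.empty \<turnstile> up \<sigma> x : t"
  proof (cases x)
    case 0 then show ?thesis using h by (auto intro: T_VarNL)
  next
    case (Suc j) then show ?thesis using h a rename_Suc[of \<Gamma>2 Map.empty "\<sigma> j" t a] by auto
  qed
next
  note a = assms(1)[unfolded SubOK_def]
  fix x t assume h: "ext b \<Delta>1 x = Some t"
  show "ext a \<Gamma>2; ?D x \<turnstile> up \<sigma> x : t"
  proof (cases x)
    case 0 then show ?thesis using h assms(2) by (auto intro: T_VarL)
  next
    case (Suc j) then show ?thesis using h a rename_Suc[of \<Gamma>2 "D j" "\<sigma> j" t a] by auto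
  qed
next
  note a = assms(1)[unfolded SubOK_def]
  fix x y assume "x \<in> dom (ext b \<Delta>1)" "y \<in> dom (ext b \<Delta>1)" "x \<noteq> y"
  moreover have key: "\<And>i j z u1 u2 v1 v2. \<Delta>1 i = Some u1 \<Longrightarrow> \<Delta>1 j = Some u2 \<Longrightarrow> i \<noteq> j \<Longrightarrow>
     D i z = Some v1 \<Longrightarrow> D j z = Some v2 \<Longrightarrow> False"
  proof -
    fix i j z u1 u2 v1 v2 assume h: "\<Delta>1 i = Some u1" "\<Delta>1 j = Some u2" "i \<noteq> j" "D i z = Some v1" "D j z = Some v2"
    have "dom (D i) \<inter> dom (D j) = {}" using a[THEN conjunct2, THEN conjunct2, THEN conjunct1] h(1-3) by blast
    then show False using h(4,5) by blast
  qed
  ultimately show "dom (?D x) \<inter> dom (?D y) = {}"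
    apply (cases x; cases y)
       apply (auto simp: dom_ext split: option.splits)
    using key by blast+
next
  note a = assms(1)[unfolded SubOK_def]
  fix x assume "x \<in> dom (ext b \<Delta>1)"
  then show "?D x \<subseteq>\<^sub>m ext b \<Delta>2"
  proof (cases x)
    case 0 then show ?thesis by (cases b) (auto simp: map_le_def)
  next
    case (Suc j)
    then have "j \<in> dom \<Delta>1" using \<open>x \<in> dom (ext b \<Delta>1)\<close> by (simp add: domIff)
    then have "D j \<subseteq>\<^sub>m \<Delta>2" using a by blast
    then show ?thesis using Suc by (auto simp: map_le_def ext_eq split: nat.splits)
  qed
next
  note a = assms(1)[unfolded SubOK_def]
  show "dom (ext b \<Delta>2) = (\<Union>x\<in>dom (ext b \<Delta>1). dom (?D x))"
    using a by (auto simp: dom_ext inj_image_mem_iff[OF inj_Suc] split: option.splits) (blast intro: domI)+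
qed



lemma subst_typing:
  "\<Gamma>1; \<Delta>1 \<turnstile> e : \<tau> \<Longrightarrow> SubOK \<Gamma>1 \<Delta>1 \<Gamma>2 \<sigma> D \<Delta>2 \<Longrightarrow> \<Gamma>2; \<Delta>2 \<turnstile> subst \<sigma> e : \<tau>"
proof (induction arbitrary: \<Gamma>2 \<sigma> D \<Delta>2 rule: typing.induct)
  case (T_VarNL \<Gamma> x \<tau>)
  have "\<Delta>2 = Map.empty" using sub_empty[OF T_VarNL.prems] .
  moreover have "\<Gamma>2; Map.empty \<turnstile> \<sigma> x : \<tau>"
    using T_VarNL.prems[unfolded SubOK_def, THEN conjunct1, rule_format, OF T_VarNL.hyps] .
  ultimately show ?case by simp
next
  case (T_VarL \<Gamma> x \<tau>)
  then show ?case using sub_single[OF T_VarL.prems] by simp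
next
  case (T_If \<Gamma> \<Delta> e1 \<Delta>' e2 \<tau> e3)
  obtain A B where AB: "\<Delta>2 = A ++ B" "dom A \<inter> dom B = {}" "SubOK \<Gamma> \<Delta> \<Gamma>2 \<sigma> D A" "SubOK \<Gamma> \<Delta>' \<Gamma>2 \<sigma> D B"
    using sub_split[OF T_If.prems T_If.hyps(4)] by blast
  show ?case using typing.T_If[OF T_If.IH(1)[OF AB(3)] T_If.IH(2)[OF AB(4)] T_If.IH(3)[OF AB(4)] AB(2)] AB(1) by simp
next
  case (T_Tens \<Gamma> \<Delta> e1 \<tau>1 \<Delta>' e2 \<tau>2)
  obtain A B where AB: "\<Delta>2 = A ++ B" "dom A \<inter> dom B = {}" "SubOK \<Gamma> \<Delta> \<Gamma>2 \<sigma> D A" "SubOK \<Gamma> \<Delta>' \<Gamma>2 \<sigma> D B"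
    using sub_split[OF T_Tens.prems T_Tens.hyps(3)] by blast
  show ?case using typing.T_Tens[OF T_Tens.IH(1)[OF AB(3)] T_Tens.IH(2)[OF AB(4)] AB(2)] AB(1) by simp
next
  case (T_AppLolli \<Gamma> \<Delta> e \<tau>' \<tau> \<Delta>' e')
  obtain A B where AB: "\<Delta>2 = A ++ B" "dom A \<inter> dom B = {}" "SubOK \<Gamma> \<Delta> \<Gamma>2 \<sigma> D A" "SubOK \<Gamma> \<Delta>' \<Gamma>2 \<sigma> D B"
    using sub_split[OF T_AppLolli.prems T_AppLolli.hyps(3)] by blast
  show ?case using typing.T_AppLolli[OF T_AppLolli.IH(1)[OF AB(3)] T_AppLolli.IH(2)[OF AB(4)] AB(2)] AB(1) by simp
next
  case (T_Let \<Gamma> \<tau>2 \<tau>1 \<Delta> e \<tau> \<Delta>' e')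
  obtain A B where AB: "\<Delta>2 = A ++ B" "dom A \<inter> dom B = {}" "SubOK \<Gamma> \<Delta> \<Gamma>2 \<sigma> D A" "SubOK \<Gamma> \<Delta>' \<Gamma>2 \<sigma> D B"
    using sub_split[OF T_Let.prems T_Let.hyps(3)] by blast
  have s1: "SubOK (ext None \<Gamma>) (ext (Some \<tau>1) \<Delta>) (ext None \<Gamma>2) (up \<sigma>)
     (scons [0\<mapsto>\<tau>1] (\<lambda>j. ext None (D j))) (ext (Some \<tau>1) A)"
    using sub_lift[of \<Gamma> \<Delta> \<Gamma>2 \<sigma> D A "Some \<tau>1" None, OF AB(3)] by simp
  have s2: "SubOK (ext None (ext None \<Gamma>)) (ext (Some \<tau>2) (ext (Some \<tau>1) \<Delta>)) (ext None (ext None \<Gamma>2)) (up (up \<sigma>))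
     (scons [0\<mapsto>\<tau>2] (\<lambda>j. ext None (scons [0\<mapsto>\<tau>1] (\<lambda>j. ext None (D j)) j))) (ext (Some \<tau>2) (ext (Some \<tau>1) A))"
    using sub_lift[OF s1, of "Some \<tau>2" None] by simp
  show ?case using typing.T_Let[OF T_Let.IH(1)[OF s2] T_Let.IH(2)[OF AB(4)] AB(2)] AB(1) by simp
next
  case (T_LamArr \<tau> \<Gamma> \<Delta> e \<tau>')
  have s: "SubOK (ext (Some \<tau>) \<Gamma>) (ext None \<Delta>) (ext (Some \<tau>) \<Gamma>2) (up \<sigma>)
     (scons Map.empty (\<lambda>j. ext None (D j))) (ext None \<Delta>2)"
    using sub_lift[OF T_LamArr.prems, of None "Some \<tau>"] by simp
  show ?case using typing.T_LamArr[OF T_LamArr.IH[OF s]] by simp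
next
  case (T_LamLolli \<Gamma> \<tau> \<Delta> e \<tau>')
  have s: "SubOK (ext None \<Gamma>) (ext (Some \<tau>) \<Delta>) (ext None \<Gamma>2) (up \<sigma>)
     (scons [0\<mapsto>\<tau>] (\<lambda>j. ext None (D j))) (ext (Some \<tau>) \<Delta>2)"
    using sub_lift[OF T_LamLolli.prems, of "Some \<tau>" None] by simp
  show ?case using typing.T_LamLolli[OF T_LamLolli.IH[OF s]] by simp
next
  case (T_AppArr \<Gamma> \<Delta> e \<tau>' \<tau> e')
  show ?case using typing.T_AppArr[OF T_AppArr.IH(1)[OF T_AppArr.prems] T_AppArr.IH(2)[OF sub_empty_intro[OF T_AppArr.prems]]] by simp
next
  case (T_Pair \<Gamma> \<Delta> e1 \<tau>1 e2 \<tau>2)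
  show ?case using typing.T_Pair[OF T_Pair.IH(1)[OF T_Pair.prems] T_Pair.IH(2)[OF T_Pair.prems]] by simp
next
  case (T_Proj1 \<Gamma> \<Delta> e \<tau>1 \<tau>2)
  show ?case using typing.T_Proj1[OF T_Proj1.IH[OF T_Proj1.prems]] by simp
next
  case (T_Proj2 \<Gamma> \<Delta> e \<tau>1 \<tau>2)
  show ?case using typing.T_Proj2[OF T_Proj2.IH[OF T_Proj2.prems]] by simp
next
  case (T_Fix \<Gamma> \<tau>) then show ?case using sub_empty typing.T_Fix by fastforce
next
  case (T_Num \<Gamma> n) then show ?case using sub_empty typing.T_Num by fastforce
next
  case (T_Succ \<Gamma>) then show ?case using sub_empty typing.T_Succ by fastforce
next
  case (T_Pred \<Gamma>) then show ?case using sub_empty typing.T_Pred by fastforce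
next
  case (T_IsZero \<Gamma>) then show ?case using sub_empty typing.T_IsZero by fastforce
next
  case (T_True \<Gamma>) then show ?case using sub_empty typing.T_True by fastforce
next
  case (T_False \<Gamma>) then show ?case using sub_empty typing.T_False by fastforce
qed



inductive_cases AppE: "\<Gamma>; \<Delta> \<turnstile> App e1 e2 : \<tau>"
inductive_cases LamE: "\<Gamma>; \<Delta> \<turnstile> Lam e : \<tau>"
inductive_cases FixE: "\<Gamma>; \<Delta> \<turnstile> Fix t : \<tau>"
inductive_cases SuccE: "\<Gamma>; \<Delta> \<turnstile> Succ : \<tau>"
inductive_cases PredE: "\<Gamma>; \<Delta> \<turnstile> Pred : \<tau>"
inductive_cases IsZeroE: "\<Gamma>; \<Delta> \<turnstile> IsZero : \<tau>"
inductive_cases NumE: "\<Gamma>; \<Delta> \<turnstile> Num n : \<tau>"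
inductive_cases TTE: "\<Gamma>; \<Delta> \<turnstile> TT : \<tau>"
inductive_cases FFE: "\<Gamma>; \<Delta> \<turnstile> FF : \<tau>"
inductive_cases IfE: "\<Gamma>; \<Delta> \<turnstile> If e1 e2 e3 : \<tau>"
inductive_cases PairE: "\<Gamma>; \<Delta> \<turnstile> Pair e1 e2 : \<tau>"
inductive_cases Proj1E: "\<Gamma>; \<Delta> \<turnstile> Proj1 e : \<tau>"
inductive_cases Proj2E: "\<Gamma>; \<Delta> \<turnstile> Proj2 e : \<tau>"
inductive_cases TensE: "\<Gamma>; \<Delta> \<turnstile> Tens e1 e2 : \<tau>"
inductive_cases LetE: "\<Gamma>; \<Delta> \<turnstile> LetT e1 e2 : \<tau>"

lemma var_part: "dom \<Gamma> \<inter> dom \<Delta> = {} \<Longrightarrow> \<Delta> j = Some t \<Longrightarrow> \<Gamma>; \<Delta> |` {j} \<turnstile> Var j : t"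
proof -
  assume a: "dom \<Gamma> \<inter> dom \<Delta> = {}" "\<Delta> j = Some t"
  then have "\<Gamma> j = None" by blast
  moreover have "\<Delta> |` {j} = [j \<mapsto> t]" using a(2) by (auto simp: restrict_map_def)
  ultimately show ?thesis by (simp add: T_VarL)
qed

lemma beta_arrow:
  assumes body: "ext (Some \<tau>') \<Gamma>; ext None \<Delta> \<turnstile> e : \<tau>" and arg: "\<Gamma>; Map.empty \<turnstile> e' : \<tau>'"
    and g: "dom \<Gamma> \<inter> dom \<Delta> = {}"
  shows "\<Gamma>; \<Delta> \<turnstile> subst1 e e' : \<tau>"
proof -
  let ?D = "scons Map.empty (\<lambda>j. \<Delta> |` {j})"
  have "SubOK (ext (Some \<tau>') \<Gamma>) (ext None \<Delta>) \<Gamma> (scons e' Var) ?D \<Delta>"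
    unfolding SubOK_def
  proof (intro conjI allI impI ballI)
    fix x t assume h: "ext (Some \<tau>') \<Gamma> x = Some t"
    show "\<Gamma>; Map.empty \<turnstile> scons e' Var x : t"
    proof (cases x)
      case 0 then show ?thesis using h arg by simp
    next
      case (Suc j) then show ?thesis using h by (simp add: T_VarNL)
    qed
  next
    fix x t assume h: "ext None \<Delta> x = Some t"
    show "\<Gamma>; ?D x \<turnstile> scons e' Var x : t"
    proof (cases x)
      case 0 then show ?thesis using h by simp
    next
      case (Suc j) then show ?thesis using h var_part[OF g] by simp
    qed
  next
    fix x y assume "x \<in> dom (ext None \<Delta>)" "y \<in> dom (ext None \<Delta>)" "x \<noteq> y"
    then show "dom (?D x) \<inter> dom (?D y) = {}"
      by (cases x; cases y) (auto simp: dom_restrict)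
  next
    fix x assume "x \<in> dom (ext None \<Delta>)"
    then show "?D x \<subseteq>\<^sub>m \<Delta>"
      by (cases x) (auto simp: map_le_def restrict_map_def)
  next
    show "dom \<Delta> = (\<Union>x\<in>dom (ext None \<Delta>). dom (?D x))"
      by (auto simp: dom_ext dom_restrict)
  qed
  then show ?thesis unfolding subst1_def by (rule subst_typing[OF body])
qed

lemma beta_lolli:
  assumes body: "ext None \<Gamma>; ext (Some \<tau>') \<Delta> \<turnstile> e : \<tau>" and arg: "\<Gamma>; \<Delta>' \<turnstile> e' : \<tau>'"
    and d: "dom \<Delta> \<inter> dom \<Delta>' = {}" and g: "dom \<Gamma> \<inter> dom \<Delta> = {}"
  shows "\<Gamma>; \<Delta> ++ \<Delta>' \<turnstile> subst1 e e' : \<tau>"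
proof -
  let ?D = "scons \<Delta>' (\<lambda>j. \<Delta> |` {j})"
  have "SubOK (ext None \<Gamma>) (ext (Some \<tau>') \<Delta>) \<Gamma> (scons e' Var) ?D (\<Delta> ++ \<Delta>')"
    unfolding SubOK_def
  proof (intro conjI allI impI ballI)
    fix x t assume h: "ext None \<Gamma> x = Some t"
    show "\<Gamma>; Map.empty \<turnstile> scons e' Var x : t"
    proof (cases x)
      case 0 then show ?thesis using h by simp
    next
      case (Suc j) then show ?thesis using h by (simp add: T_VarNL)
    qed
  next
    fix x t assume h: "ext (Some \<tau>') \<Delta> x = Some t"
    show "\<Gamma>; ?D x \<turnstile> scons e' Var x : t"
    proof (cases x)
      case 0 then show ?thesis using h arg by simp
    next
      case (Suc j) then show ?thesis using h var_part[OF g] by simp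
    qed
  next
    fix x y assume "x \<in> dom (ext (Some \<tau>') \<Delta>)" "y \<in> dom (ext (Some \<tau>') \<Delta>)" "x \<noteq> y"
    then show "dom (?D x) \<inter> dom (?D y) = {}" using d
      by (cases x; cases y) (auto simp: dom_restrict)
  next
    fix x assume "x \<in> dom (ext (Some \<tau>') \<Delta>)"
    then show "?D x \<subseteq>\<^sub>m \<Delta> ++ \<Delta>'"
    proof (cases x)
      case 0 then show ?thesis by (simp add: map_le_map_add)
    next
      case (Suc j)
      then have "j \<in> dom \<Delta>" using \<open>x \<in> dom (ext (Some \<tau>') \<Delta>)\<close> by (simp add: domIff)
      then have "\<Delta>' j = None" using d by blast
      then show ?thesis using Suc by (auto simp: map_le_def restrict_map_def map_add_def)
    qed
  next
    show "dom (\<Delta> ++ \<Delta>') = (\<Union>x\<in>dom (ext (Some \<tau>') \<Delta>). dom (?D x))"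
      by (auto simp: dom_ext dom_restrict)
  qed
  then show ?thesis unfolding subst1_def by (rule subst_typing[OF body])
qed

lemma beta_let:
  assumes body: "ext None (ext None \<Gamma>); ext (Some \<tau>2) (ext (Some \<tau>1) \<Delta>) \<turnstile> e : \<tau>"
    and a1: "\<Gamma>; \<Delta>a \<turnstile> e1 : \<tau>1" and a2: "\<Gamma>; \<Delta>b \<turnstile> e2 : \<tau>2"
    and d: "dom \<Delta> \<inter> dom (\<Delta>a ++ \<Delta>b) = {}" and dab: "dom \<Delta>a \<inter> dom \<Delta>b = {}"
    and g: "dom \<Gamma> \<inter> dom \<Delta> = {}"
  shows "\<Gamma>; \<Delta> ++ (\<Delta>a ++ \<Delta>b) \<turnstile> subst2 e e1 e2 : \<tau>"
proof -
  let ?D = "scons \<Delta>b (scons \<Delta>a (\<lambda>j. \<Delta> |` {j}))"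
  have "SubOK (ext None (ext None \<Gamma>)) (ext (Some \<tau>2) (ext (Some \<tau>1) \<Delta>)) \<Gamma> (scons e2 (scons e1 Var)) ?D (\<Delta> ++ (\<Delta>a ++ \<Delta>b))"
    unfolding SubOK_def
  proof (intro conjI allI impI ballI)
    fix x t assume h: "ext None (ext None \<Gamma>) x = Some t"
    show "\<Gamma>; Map.empty \<turnstile> scons e2 (scons e1 Var) x : t"
    proof (cases x)
      case 0 then show ?thesis using h by simp
    next
      case (Suc j) then show ?thesis using h by (cases j) (simp_all add: T_VarNL)
    qed
  next
    fix x t assume h: "ext (Some \<tau>2) (ext (Some \<tau>1) \<Delta>) x = Some t"
    show "\<Gamma>; ?D x \<turnstile> scons e2 (scons e1 Var) x : t"
    proof (cases x)
      case 0 then show ?thesis using h a2 by simp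
    next
      case (Suc j) then show ?thesis using h a1 var_part[OF g] by (cases j) simp_all
    qed
  next
    fix x y assume "x \<in> dom (ext (Some \<tau>2) (ext (Some \<tau>1) \<Delta>))" "y \<in> dom (ext (Some \<tau>2) (ext (Some \<tau>1) \<Delta>))" "x \<noteq> y"
    then show "dom (?D x) \<inter> dom (?D y) = {}" using d dab
      apply (cases x; cases y)
         apply (simp_all add: dom_restrict)
      by (auto simp: scons_def domIff split: nat.splits)
  next
    fix x assume "x \<in> dom (ext (Some \<tau>2) (ext (Some \<tau>1) \<Delta>))"
    then show "?D x \<subseteq>\<^sub>m \<Delta> ++ (\<Delta>a ++ \<Delta>b)"
    proof (cases x)
      case 0
      have "?D x = \<Delta>b" using 0 by simp
      then show ?thesis unfolding map_add_assoc by (simp only: map_le_map_add)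
    next
      case (Suc k)
      show ?thesis
      proof (cases k)
        case 0
        have e: "\<Delta> ++ (\<Delta>a ++ \<Delta>b) = (\<Delta> ++ \<Delta>b) ++ \<Delta>a"
        proof -
          have "\<Delta>a ++ \<Delta>b = \<Delta>b ++ \<Delta>a" by (rule map_add_comm[OF dab])
          then show ?thesis by (simp only: map_add_assoc)
        qed
        have "?D x = \<Delta>a" using 0 Suc by simp
        then show ?thesis unfolding e by (simp only: map_le_map_add)
      next
        case (Suc j)
        then have "j \<in> dom \<Delta>" using \<open>x \<in> dom _\<close> \<open>x = Suc k\<close> by (simp add: domIff)
        then have "j \<notin> dom (\<Delta>a ++ \<Delta>b)" using d by (rule disjoint_iff[THEN iffD1, rule_format, rotated])
        then have "(\<Delta>a ++ \<Delta>b) j = None" by (simp only: domIff not_not)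
        then show ?thesis using Suc \<open>x = Suc k\<close> by (auto simp: map_le_def restrict_map_def map_add_def)
      qed
    qed
  next
    show "dom (\<Delta> ++ (\<Delta>a ++ \<Delta>b)) = (\<Union>x\<in>dom (ext (Some \<tau>2) (ext (Some \<tau>1) \<Delta>)). dom (?D x))"
    proof (rule set_eqI, rule iffI)
      fix z assume "z \<in> dom (\<Delta> ++ (\<Delta>a ++ \<Delta>b))"
      then consider "z \<in> dom \<Delta>b" | "z \<in> dom \<Delta>a" | "z \<in> dom \<Delta>" by (simp only: dom_map_add) blast
      then show "z \<in> (\<Union>x\<in>dom (ext (Some \<tau>2) (ext (Some \<tau>1) \<Delta>)). dom (?D x))"
      proof cases
        case 1 then show ?thesis by (intro UN_I[of 0]) (simp_all add: domIff)
      next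
        case 2 then show ?thesis by (intro UN_I[of "Suc 0"]) (simp_all add: domIff)
      next
        case 3 then show ?thesis by (intro UN_I[of "Suc (Suc z)"]) (simp_all add: domIff restrict_map_def)
      qed
    next
      fix z assume "z \<in> (\<Union>x\<in>dom (ext (Some \<tau>2) (ext (Some \<tau>1) \<Delta>)). dom (?D x))"
      then obtain x where x: "x \<in> dom (ext (Some \<tau>2) (ext (Some \<tau>1) \<Delta>))" "z \<in> dom (?D x)" by blast
      show "z \<in> dom (\<Delta> ++ (\<Delta>a ++ \<Delta>b))"
      proof (cases x)
        case 0 then show ?thesis using x by simp
      next
        case (Suc k) show ?thesis
        proof (cases k)
          case 0 then show ?thesis using x Suc by simp
        next
          case (Suc j) then show ?thesis using x \<open>x = Suc k\<close> by (simp add: restrict_map_def domIff split: if_splits)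
        qed
      qed
    qed
  qed
  then show ?thesis unfolding subst2_def by (rule subst_typing[OF body])
qed



lemma sr: "e \<leadsto> e' \<Longrightarrow> \<Gamma>; \<Delta> \<turnstile> e : \<tau> \<Longrightarrow> \<Gamma>; \<Delta> \<turnstile> e' : \<tau>"
proof (induction arbitrary: \<Gamma> \<Delta> \<tau> rule: step.induct)
  case (S_Beta e e')
  from S_Beta.prems show ?case
    apply (rule AppE)
    subgoal for \<tau>'
      apply (frule typing_disj[where e="Lam e"])
      apply (erule LamE)
       apply (simp add: beta_arrow)
      by simp
    subgoal for \<Delta>a \<tau>' \<Delta>b
      apply (frule typing_disj[where e="Lam e"])
      apply (erule LamE)
       apply simp
      by (simp add: beta_lolli)
    done
next
  case (S_Fix t e)
  from S_Fix.prems show ?case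
    apply (rule AppE)
    subgoal for \<tau>'
      by (erule FixE) (auto intro!: T_AppArr T_Fix)
    subgoal for \<Delta>a \<tau>' \<Delta>b
      by (erule FixE) simp
    done
next
  case (S_Succ n)
  from S_Succ.prems show ?case
    by (rule AppE) (auto elim!: SuccE NumE intro: T_Num)
next
  case S_Pred0
  from S_Pred0.prems show ?case
    by (rule AppE) (auto elim!: PredE NumE intro: T_Num)
next
  case (S_PredS n)
  from S_PredS.prems show ?case
    by (rule AppE) (auto elim!: PredE NumE intro: T_Num)
next
  case S_IsZero0
  from S_IsZero0.prems show ?case
    by (rule AppE) (auto elim!: IsZeroE NumE intro: T_True)
next
  case (S_IsZeroS n)
  from S_IsZeroS.prems show ?case
    by (rule AppE) (auto elim!: IsZeroE NumE intro: T_False)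
next
  case (S_IfT e1 e2)
  from S_IfT.prems show ?case
    by (rule IfE) (auto elim!: TTE)
next
  case (S_IfF e1 e2)
  from S_IfF.prems show ?case
    by (rule IfE) (auto elim!: FFE)
next
  case (S_Proj1 e1 e2)
  from S_Proj1.prems show ?case
    by (rule Proj1E) (auto elim!: PairE)
next
  case (S_Proj2 e1 e2)
  from S_Proj2.prems show ?case
    by (rule Proj2E) (auto elim!: PairE)
next
  case (S_Let e1 e2 e)
  from S_Let.prems show ?case
    apply (rule LetE)
    subgoal for \<tau>2 \<tau>1 \<Delta>1 \<Delta>'
      apply (frule typing_disj[where e="Tens e1 e2"])
      apply (erule TensE)
      subgoal for \<Delta>a \<tau>1' \<Delta>b \<tau>2'
      proof -
        assume h: "\<Delta> = \<Delta>1 ++ \<Delta>'" "ext None (ext None \<Gamma>); ext (Some \<tau>2) (ext (Some \<tau>1) \<Delta>1) \<turnstile> e : \<tau>"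
           "dom \<Delta>1 \<inter> dom \<Delta>' = {}" "\<Delta>' = \<Delta>a ++ \<Delta>b" "Tensor \<tau>1 \<tau>2 = Tensor \<tau>1' \<tau>2'"
           "\<Gamma>; \<Delta>a \<turnstile> e1 : \<tau>1'" "\<Gamma>; \<Delta>b \<turnstile> e2 : \<tau>2'" "dom \<Delta>a \<inter> dom \<Delta>b = {}"
        have g: "dom \<Gamma> \<inter> dom \<Delta>1 = {}" using typing_disj[OF S_Let.prems] h(1) by auto
        have "\<Gamma>; \<Delta>1 ++ (\<Delta>a ++ \<Delta>b) \<turnstile> subst2 e e1 e2 : \<tau>"
          apply (rule beta_let[OF h(2)])
          using h g by auto
        then show ?thesis using h(1,4) by simp
      qed
      done
    done
next
  case (C_Succ e e')
  from C_Succ.prems show ?case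
    by (rule AppE) (auto elim!: SuccE intro: T_AppLolli T_Succ C_Succ.IH)
next
  case (C_Pred e e')
  from C_Pred.prems show ?case
    by (rule AppE) (auto elim!: PredE intro: T_AppLolli T_Pred C_Pred.IH)
next
  case (C_IsZero e e')
  from C_IsZero.prems show ?case
    by (rule AppE) (auto elim!: IsZeroE intro: T_AppLolli T_IsZero C_IsZero.IH)
next
  case (C_App e e' e2)
  from C_App.prems show ?case
    by (rule AppE) (auto intro: T_AppLolli T_AppArr C_App.IH)
next
  case (C_If e e' e1 e2)
  from C_If.prems show ?case
    by (rule IfE) (auto intro: T_If C_If.IH)
next
  case (C_Proj1 e e')
  from C_Proj1.prems show ?case
    by (rule Proj1E) (auto intro: T_Proj1 C_Proj1.IH)
next
  case (C_Proj2 e e')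
  from C_Proj2.prems show ?case
    by (rule Proj2E) (auto intro: T_Proj2 C_Proj2.IH)
next
  case (C_Let e e' e2)
  from C_Let.prems show ?case
    by (rule LetE) (auto intro: T_Let C_Let.IH)
qed


theorem proposition2:
  assumes "finite (dom \<Gamma>)" and "finite (dom \<Delta>)" and "dom \<Gamma> \<inter> dom \<Delta> = {}"
    and "\<Gamma>; \<Delta> \<turnstile> e : \<tau>" and "e \<leadsto> e'"
  shows "\<Gamma>; \<Delta> \<turnstile> e' : \<tau>"
  using sr[OF assms(5) assms(4)] .

end
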